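(* Let $M\in M_n(\mathbb{Z})$ and let $\mu$ be an integer such that $M$ is $\mu$-collapsed. Then $|\mu|\le\|M\|+\sqrt2$. If moreover no column vector of $M-\mu\,\mathrm{Id}$ equals a vector $E_{ij}=e_i-e_j$ with $i\neq j$, then $|\mu|\le\|M\|+1$.
   Context: For $M\in M_n(\mathbb{Z})$, $\mathrm{Im}(M)$ is the $\mathbb{Z}$-span of its columns; $M$ is spread if the quotient map $\mathbb{Z}^n\to\mathbb{Z}^n/\mathrm{Im}(M)$ is injective on the standard basis $\{e_1,\dots,e_n\}$, and $M$ is $\mu$-collapsed if $M-\mu\,\mathrm{Id}$ is not spread. $\|M\|$ denotes the operator norm $\max_{\|v\|=1}\|Mv\|$ with respect to the Euclidean norm. *)

theory Defs
  imports "HOL-Analysis.Analysis"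
begin

text \<open>Integer n x n matrices are rendered as int^'n^'n with a finite index type 'n.
  Im(M): the Z-span of the columns of M, i.e. all integer combinations M *v x.\<close>
definition int_image :: "int^'n^'n \<Rightarrow> (int^'n) set" where
  "int_image M = {M *v x | x. True}"

definition spread :: "int^'n^'n \<Rightarrow> bool" where
  "spread M \<longleftrightarrow>
     inj_on (\<lambda>v::int^'n. {v + y | y. y \<in> int_image M}) {axis i 1 | i. True}"

definition collapsed :: "int \<Rightarrow> int^'n^'n \<Rightarrow> bool" where
  "collapsed \<mu> M \<longleftrightarrow> \<not> spread (M - mat \<mu>)"

definition real_mat :: "int^'n^'n \<Rightarrow> real^'n^'n" where
  "real_mat M = (\<chi> i j. real_of_int (M$i$j))"

definition op_norm :: "int^'n^'n \<Rightarrow> real" where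
  "op_norm M = onorm (\<lambda>v. real_mat M *v v)"

end

theory Submission
  imports Defs
begin

definition rv :: "int^'n \<Rightarrow> real^'n" where
  "rv x = (\<chi> k. real_of_int (x$k))"

lemma rv_mult: "real_mat M *v rv x = rv (M *v x)"
  by (simp add: vec_eq_iff rv_def real_mat_def matrix_vector_mult_def)

lemma rv_diff: "rv (a - b) = rv a - rv b"
  by (simp add: vec_eq_iff rv_def)

lemma rv_mat: "rv (mat c *v x) = real_of_int c *\<^sub>R rv x"
proof -
  have "mat c *v x = c *s x"
    by (simp add: vec_eq_iff mat_def matrix_vector_mult_def if_distrib[of "\<lambda>t. t * _"] cong: if_cong)
  then show ?thesis by (simp add: vec_eq_iff rv_def)
qed

lemma norm_rv: "norm (rv x) = sqrt (real_of_int (\<Sum>k\<in>UNIV. (x$k)^2))"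
  by (simp add: norm_eq_sqrt_inner inner_vec_def rv_def power2_eq_square)

lemma sumsq_axis:
  assumes "i \<noteq> j"
  shows "(\<Sum>k\<in>UNIV. ((axis i 1 - axis j 1 :: int^'n)$k)^2) = 2"
proof -
  have "\<And>k. ((axis i 1 - axis j 1 :: int^'n)$k)^2 = (if k = i then 1 else 0) + (if k = j then 1 else 0)"
    using assms by (auto simp: axis_def)
  then show ?thesis by (simp add: sum.distrib)
qed

lemma sumsq_ge1:
  fixes x :: "int^'n"
  assumes "x \<noteq> 0"
  obtains k where "x$k \<noteq> 0" "(\<Sum>k\<in>UNIV. (x$k)^2) \<ge> 1"
    "(\<Sum>k\<in>UNIV. (x$k)^2) = 1 \<Longrightarrow> x = (x$k) *s axis k 1 \<and> (x$k = 1 \<or> x$k = -1)"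
proof -
  obtain k where k: "x$k \<noteq> 0" using assms by (auto simp: vec_eq_iff)
  have split: "(\<Sum>l\<in>UNIV. (x$l)^2) = (x$k)^2 + (\<Sum>l\<in>UNIV-{k}. (x$l)^2)"
    by (simp add: sum.remove)
  have nn: "(\<Sum>l\<in>UNIV-{k}. (x$l)^2) \<ge> 0" by (simp add: sum_nonneg)
  have xk: "(x$k)^2 \<ge> 1" using k
    by (smt (verit) one_le_power power2_less_0 zero_less_power2 abs_le_square_iff power2_abs)
  have "(\<Sum>l\<in>UNIV. (x$l)^2) \<ge> 1" using split nn xk by linarith
  moreover have "x = (x$k) *s axis k 1 \<and> (x$k = 1 \<or> x$k = -1)" if h: "(\<Sum>l\<in>UNIV. (x$l)^2) = 1"
  proof -
    have "(\<Sum>l\<in>UNIV-{k}. (x$l)^2) = 0" using split nn xk h by linarith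
    then have z: "\<forall>l\<in>UNIV-{k}. (x$l)^2 = 0"
      by (subst (asm) sum_nonneg_eq_0_iff) auto
    have "(x$k)^2 = 1" using split nn xk h by linarith
    then have "x$k = 1 \<or> x$k = -1"
      by (metis abs_power2 power2_eq_1_iff)
    moreover have "x = (x$k) *s axis k 1" using z
      by (auto simp: vec_eq_iff axis_def)
    ultimately show ?thesis by blast
  qed
  ultimately show ?thesis using that k by blast
qed

theorem proposition3p3:
  fixes M :: "int^'n^'n" and \<mu> :: int
  assumes "collapsed \<mu> M"
  shows "\<bar>real_of_int \<mu>\<bar> \<le> op_norm M + sqrt 2 \<and>
         ((\<forall>k i j. i \<noteq> j \<longrightarrow> column k (M - mat \<mu>) \<noteq> axis i 1 - axis j 1)
           \<longrightarrow> \<bar>real_of_int \<mu>\<bar> \<le> op_norm M + 1)"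
proof -
  define A where "A = M - mat \<mu>"
  obtain i j where ij: "i \<noteq> j"
    and eq: "{axis i 1 + y | y. y \<in> int_image A} = {axis j 1 + y | y. y \<in> int_image A}"
  proof -
    have "\<not> inj_on (\<lambda>v::int^'n. {v + y | y. y \<in> int_image A}) {axis i 1 | i. True}"
      using assms unfolding collapsed_def spread_def A_def by blast
    then obtain a b where "a \<in> {axis i 1 | i. True}" "b \<in> {axis i 1 | i. True}" "a \<noteq> b"
      and "{a + y | y. y \<in> int_image A} = {b + y | y. y \<in> int_image A}"
      unfolding inj_on_def by blast
    then obtain i' j' where "a = axis i' 1" "b = axis j' 1" "a \<noteq> b"
      and "{a + y | y. y \<in> int_image A} = {b + y | y. y \<in> int_image A}" by blast
    then show ?thesis using that[of i' j'] by fastforce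
  qed
  have "axis i 1 \<in> {axis i 1 + y | y. y \<in> int_image A}"
    unfolding int_image_def by (rule CollectI, rule exI[of _ 0]) (auto intro: exI[of _ 0])
  then have "axis i 1 \<in> {axis j 1 + y | y. y \<in> int_image A}" using eq by simp
  then obtain y where "y \<in> int_image A" "axis i 1 = axis j 1 + y" by blast
  then obtain x where x: "axis i 1 = axis j 1 + A *v x"
    unfolding int_image_def by blast
  define d :: "int^'n" where "d = axis i 1 - axis j 1"
  have Ax: "A *v x = d" using x unfolding d_def by (simp add: algebra_simps)
  have x0: "x \<noteq> 0"
  proof
    assume "x = 0"
    then have "d = 0" using Ax by simp
    then have "d $ i = 0" by simp
    then show False using ij unfolding d_def by (simp add: axis_def)
  qed
  have nd: "norm (rv d) = sqrt 2" using sumsq_axis[OF ij] unfolding norm_rv d_def by simp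
  define S where "S = (\<Sum>k\<in>UNIV. (x$k)^2)"
  have nx: "norm (rv x) = sqrt (real_of_int S)" unfolding S_def norm_rv ..
  obtain k where k: "x$k \<noteq> 0" "S \<ge> 1" "S = 1 \<Longrightarrow> x = (x$k) *s axis k 1 \<and> (x$k = 1 \<or> x$k = -1)"
    using sumsq_ge1[OF x0] unfolding S_def by blast
  have eqn: "real_mat M *v rv x = real_of_int \<mu> *\<^sub>R rv x + rv d"
  proof -
    have "rv d = rv (M *v x) - rv (mat \<mu> *v x)"
      using Ax unfolding A_def by (metis matrix_vector_mult_diff_rdistrib rv_diff)
    then show ?thesis by (simp add: rv_mult rv_mat)
  qed
  have bnd: "norm (real_mat M *v rv x) \<le> op_norm M * norm (rv x)"
    unfolding op_norm_def by (rule onorm) simp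
  have "\<bar>real_of_int \<mu>\<bar> * norm (rv x) \<le> norm (real_mat M *v rv x) + norm (rv d)"
    using eqn norm_triangle_ineq4[of "real_of_int \<mu> *\<^sub>R rv x + rv d" "rv d"]
    by (metis add_diff_cancel_right' norm_scaleR norm_triangle_sub)
  then have main: "\<bar>real_of_int \<mu>\<bar> * norm (rv x) \<le> op_norm M * norm (rv x) + sqrt 2"
    using bnd nd by linarith
  define n where "n = norm (rv x)"
  have n1: "n \<ge> 1" unfolding n_def nx using k(2) by simp
  have gen: "\<bar>real_of_int \<mu>\<bar> \<le> op_norm M + sqrt 2 / n"
  proof -
    have "(\<bar>real_of_int \<mu>\<bar> - op_norm M) * n \<le> sqrt 2" using main unfolding n_def
      by (simp add: algebra_simps)
    then have "\<bar>real_of_int \<mu>\<bar> - op_norm M \<le> sqrt 2 / n" using n1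
      by (simp add: pos_le_divide_eq)
    then show ?thesis by simp
  qed
  have p1: "sqrt 2 / n \<le> sqrt 2" using n1
    by (simp add: divide_le_eq)
  have p2: "\<bar>real_of_int \<mu>\<bar> \<le> op_norm M + 1"
    if H: "\<forall>k i j. i \<noteq> j \<longrightarrow> column k (M - mat \<mu>) \<noteq> axis i 1 - axis j 1"
  proof -
    have "S \<noteq> 1"
    proof
      assume "S = 1"
      with k(3) have xe: "x = (x$k) *s axis k 1" and s: "x$k = 1 \<or> x$k = -1" by auto
      have "A *v x = (x$k) *s column k A"
        by (subst xe) (simp add: vec_eq_iff matrix_vector_mult_def column_def axis_def
            if_distrib cong: if_cong)
      with Ax have "(x$k) *s column k A = d" by simp
      have "column k A = axis i 1 - axis j 1 \<or> column k A = axis j 1 - axis i 1"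
        using s
      proof
        assume "x$k = 1"
        then have "column k A = d" using \<open>(x$k) *s column k A = d\<close> by simp
        then show ?thesis unfolding d_def by blast
      next
        assume "x$k = -1"
        then have "- column k A = d" using \<open>(x$k) *s column k A = d\<close>
          by (simp add: vec_eq_iff)
        then have "column k A = - d" by (metis minus_minus)
        then show ?thesis unfolding d_def by simp
      qed
      then show False using H ij unfolding A_def by metis
    qed
    then have "S \<ge> 2" using k(2) by simp
    then have "n \<ge> sqrt 2" unfolding n_def nx by simp
    then have "sqrt 2 / n \<le> 1" using n1 by (simp add: divide_le_eq)
    then show ?thesis using gen by linarith
  qed
  have "\<bar>real_of_int \<mu>\<bar> \<le> op_norm M + sqrt 2" using gen p1 by linarith
  then show ?thesis using p2 by blast
qed

end
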